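(* For every formula $\varphi$ of $\mathcal L^{\bigcirc}_\square$: $\varphi$ is derivable in $\mathbf{K4C}$ if and only if $\varphi$ is valid, with respect to the $d$-semantics, on every dynamic topological system $\langle X,\tau,f\rangle$ whose underlying space $\langle X,\tau\rangle$ is a $T_D$ space.
   Context: Fix a non-empty set $\mathsf{PV}$ of propositional variables. The language $\mathcal L^{\bigcirc}_\square$ is given by $\varphi::= p\mid \varphi\wedge\varphi\mid\neg\varphi\mid\square\varphi\mid\bigcirc\varphi$ with $p\in\mathsf{PV}$. Axioms and rules: Taut; K: $\square(\varphi\to\psi)\to(\square\varphi\to\square\psi)$; 4: $\square\varphi\to\square\square\varphi$; ${\rm Next}_\neg$: $\neg\bigcirc\varphi\leftrightarrow\bigcirc\neg\varphi$; ${\rm Next}_\wedge$: $\bigcirc(\varphi\wedge\psi)\leftrightarrow\bigcirc\varphi\wedge\bigcirc\psi$; C: $\bigcirc\varphi\wedge\bigcirc\square\varphi\to\square\bigcirc\varphi$; rules modus ponens, ${\rm Nec}_\square$, ${\rm Nec}_\bigcirc$. $\mathbf{K4C}$ is axiomatised by Taut, K, 4, ${\rm Next}_\neg$, ${\rm Next}_\wedge$, C and closed under these rules. A $T_D$ space is a topological space in which every singleton $\{x\}$ equals $U\cap F$ for some open $U$ and closed $F$. A dynamic topological system (DTS) is $\langle X,\tau,f\rangle$ with $f\colon X\to X$ continuous. The Cantor derivative $d(A)$ of $A\subseteq X$ is the set of $x$ in the closure of $A\setminus\{x\}$. Under a valuation $\nu\colon\mathsf{PV}\to\wp(X)$: $\|p\|=\nu(p)$,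 $\|\neg\varphi\|=X\setminus\|\varphi\|$, $\|\varphi\wedge\psi\|=\|\varphi\|\cap\|\psi\|$, $\|\square\varphi\|=X\setminus d(\|\neg\varphi\|)$, $\|\bigcirc\varphi\|=f^{-1}(\|\varphi\|)$. Valid on a DTS means the truth set is $X$ under every valuation. *)

theory Defs
  imports "HOL-Analysis.Analysis"
begin

datatype 'pv fm =
    Var 'pv
  | And "'pv fm" "'pv fm"
  | Neg "'pv fm"
  | Box "'pv fm"
  | Next "'pv fm"

definition Imp :: "'pv fm \<Rightarrow> 'pv fm \<Rightarrow> 'pv fm" where
  "Imp a b = Neg (And a (Neg b))"

definition Iff :: "'pv fm \<Rightarrow> 'pv fm \<Rightarrow> 'pv fm" where
  "Iff a b = And (Imp a b) (Imp b a)"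

section \<open>Propositional tautologies (modal subformulas treated as atoms)\<close>

fun tv :: "('pv fm \<Rightarrow> bool) \<Rightarrow> 'pv fm \<Rightarrow> bool" where
  "tv v (Var p) = v (Var p)"
| "tv v (And a b) = (tv v a \<and> tv v b)"
| "tv v (Neg a) = (\<not> tv v a)"
| "tv v (Box a) = v (Box a)"
| "tv v (Next a) = v (Next a)"

definition taut :: "'pv fm \<Rightarrow> bool" where
  "taut \<phi> \<longleftrightarrow> (\<forall>v. tv v \<phi>)"

inductive K4C :: "'pv fm \<Rightarrow> bool" where
  Taut: "taut \<phi> \<Longrightarrow> K4C \<phi>"
| K: "K4C (Imp (Box (Imp \<phi> \<psi>)) (Imp (Box \<phi>) (Box \<psi>)))"
| Four: "K4C (Imp (Box \<phi>) (Box (Box \<phi>)))"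
| Next_neg: "K4C (Iff (Neg (Next \<phi>)) (Next (Neg \<phi>)))"
| Next_and: "K4C (Iff (Next (And \<phi> \<psi>)) (And (Next \<phi>) (Next \<psi>)))"
| C: "K4C (Imp (And (Next \<phi>) (Next (Box \<phi>))) (Box (Next \<phi>)))"
| MP: "K4C (Imp \<phi> \<psi>) \<Longrightarrow> K4C \<phi> \<Longrightarrow> K4C \<psi>"
| Nec_box: "K4C \<phi> \<Longrightarrow> K4C (Box \<phi>)"
| Nec_next: "K4C \<phi> \<Longrightarrow> K4C (Next \<phi>)"

fun tset :: "'a topology \<Rightarrow> ('a \<Rightarrow> 'a) \<Rightarrow> ('pv \<Rightarrow> 'a set) \<Rightarrow> 'pv fm \<Rightarrow> 'a set" where
  "tset T f V (Var p) = V p"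
| "tset T f V (And a b) = tset T f V a \<inter> tset T f V b"
| "tset T f V (Neg a) = topspace T - tset T f V a"
| "tset T f V (Box a) = topspace T - (T derived_set_of (topspace T - tset T f V a))"
| "tset T f V (Next a) = {x \<in> topspace T. f x \<in> tset T f V a}"

definition TD_space :: "'a topology \<Rightarrow> bool" where
  "TD_space T \<longleftrightarrow>
     (\<forall>x\<in>topspace T. \<exists>U F. openin T U \<and> closedin T F \<and> {x} = U \<inter> F)"

definition DTS :: "'a topology \<Rightarrow> ('a \<Rightarrow> 'a) \<Rightarrow> bool" where
  "DTS T f \<longleftrightarrow> continuous_map T T f"

definition valid_in :: "'a topology \<Rightarrow> ('a \<Rightarrow> 'a) \<Rightarrow> 'pv fm \<Rightarrow> bool" where
  "valid_in T f \<phi> \<longleftrightarrow>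
     (\<forall>V. (\<forall>p. V p \<subseteq> topspace T) \<longrightarrow> tset T f V \<phi> = topspace T)"

definition valid_TD :: "'a itself \<Rightarrow> 'pv fm \<Rightarrow> bool" where
  "valid_TD (_::'a itself) \<phi> \<longleftrightarrow>
     (\<forall>(T::'a topology) f. TD_space T \<and> DTS T f \<longrightarrow> valid_in T f \<phi>)"

end

theory Submission
  imports Defs
begin

lemma tv_Imp[simp]: "tv v (Imp a b) = (tv v a \<longrightarrow> tv v b)"
  by (simp add: Imp_def)

lemma tv_Iff[simp]: "tv v (Iff a b) = (tv v a = tv v b)"
  by (auto simp add: Iff_def)

definition Top :: "'pv fm" where "Top = Imp (Var undefined) (Var undefined)"

lemma tv_Top[simp]: "tv v Top" by (simp add: Top_def)

fun conjs :: "'pv fm list \<Rightarrow> 'pv fm" where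
  "conjs [] = Top"
| "conjs (a # L) = And a (conjs L)"

lemma tv_conjs[simp]: "tv v (conjs L) = (\<forall>x\<in>set L. tv v x)"
  by (induction L) auto

lemma K4C_conjs: "(\<And>x. x \<in> set L \<Longrightarrow> K4C x) \<Longrightarrow> K4C (conjs L)"
proof (induction L)
  case Nil
  then show ?case by (intro K4C.Taut) (simp add: taut_def)
next
  case (Cons a L)
  have "K4C (Imp a (Imp (conjs L) (And a (conjs L))))"
    by (intro K4C.Taut) (simp add: taut_def)
  then show ?case using Cons by (auto intro: K4C.MP)
qed

lemma taut_rule:
  assumes "\<And>x. x \<in> set L \<Longrightarrow> K4C x"
    and "\<And>v. \<forall>x\<in>set L. tv v x \<Longrightarrow> tv v \<psi>"
  shows "K4C \<psi>"
proof -
  have "K4C (Imp (conjs L) \<psi>)" using assms(2) by (intro K4C.Taut) (simp add: taut_def)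
  then show ?thesis using K4C_conjs[OF assms(1)] by (rule K4C.MP)
qed

lemma taut1: "K4C a \<Longrightarrow> (\<And>v. tv v a \<Longrightarrow> tv v b) \<Longrightarrow> K4C b"
  by (rule taut_rule[of "[a]"]) auto

lemma taut2: "K4C a \<Longrightarrow> K4C b \<Longrightarrow> (\<And>v. tv v a \<Longrightarrow> tv v b \<Longrightarrow> tv v c) \<Longrightarrow> K4C c"
  by (rule taut_rule[of "[a,b]"]) auto

lemma box_mono: "K4C (Imp a b) \<Longrightarrow> K4C (Imp (Box a) (Box b))"
  using K4C.MP[OF K4C.K K4C.Nec_box] .

lemma next_mono:
  assumes "K4C (Imp a b)" shows "K4C (Imp (Next a) (Next b))"
proof -
  have 1: "K4C (Next (Imp a b))" using assms by (rule K4C.Nec_next)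
  show ?thesis
    by (rule taut_rule[of "[Next (Imp a b), Iff (Neg (Next (And a (Neg b)))) (Next (Neg (And a (Neg b)))),
       Iff (Next (And a (Neg b))) (And (Next a) (Next (Neg b))), Iff (Neg (Next b)) (Next (Neg b))]"])
     (use 1 K4C.Next_neg K4C.Next_and in \<open>auto simp: Imp_def\<close>)
qed

lemma box_and: "K4C (Imp (Box a) (Imp (Box c) (Box (And a c))))"
proof -
  have "K4C (Imp a (Imp c (And a c)))" by (intro K4C.Taut) (simp add: taut_def)
  then have 1: "K4C (Imp (Box a) (Box (Imp c (And a c))))" by (rule box_mono)
  show ?thesis
    by (rule taut_rule[of "[Imp (Box a) (Box (Imp c (And a c))),
          Imp (Box (Imp c (And a c))) (Imp (Box c) (Box (And a c)))]"])
      (use 1 K4C.K in auto)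
qed

lemma box_conjs: "K4C (Imp (conjs (map Box L)) (Box (conjs L)))"
proof (induction L)
  case Nil
  have "K4C (Box Top)" by (intro K4C.Nec_box K4C.Taut) (simp add: taut_def)
  then show ?case by (rule taut1) auto
next
  case (Cons a L)
  show ?case
    by (rule taut_rule[of "[Imp (conjs (map Box L)) (Box (conjs L)),
            Imp (Box a) (Imp (Box (conjs L)) (Box (And a (conjs L))))]"])
       (use Cons box_and in auto)
qed

lemma next_and_imp: "K4C (Imp (Next a) (Imp (Next c) (Next (And a c))))"
  by (rule taut_rule[of "[Iff (Next (And a c)) (And (Next a) (Next c))]"])
     (use K4C.Next_and in auto)

lemma next_conjs: "K4C (Imp (conjs (map Next L)) (Next (conjs L)))"
proof (induction L)
  case Nil
  have "K4C (Next Top)" by (intro K4C.Nec_next K4C.Taut) (simp add: taut_def)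
  then show ?case by (rule taut1) auto
next
  case (Cons a L)
  show ?case
    by (rule taut_rule[of "[Imp (conjs (map Next L)) (Next (conjs L)),
            Imp (Next a) (Imp (Next (conjs L)) (Next (And a (conjs L))))]"])
       (use Cons next_and_imp in auto)
qed

section \<open>Consistency and maximal consistent sets\<close>

definition consistent :: "'pv fm set \<Rightarrow> bool" where
  "consistent S \<longleftrightarrow> \<not> (\<exists>L. set L \<subseteq> S \<and> K4C (Neg (conjs L)))"

definition MCS :: "'pv fm set \<Rightarrow> bool" where
  "MCS G \<longleftrightarrow> consistent G \<and> (\<forall>\<phi>. \<phi> \<notin> G \<longrightarrow> \<not> consistent (insert \<phi> G))"

lemma MCS_deriv:
  assumes G: "MCS G" and L: "set L \<subseteq> G" and d: "K4C (Imp (conjs L) \<psi>)"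
  shows "\<psi> \<in> G"
proof (rule ccontr)
  assume "\<psi> \<notin> G"
  then have "\<not> consistent (insert \<psi> G)" using G by (auto simp: MCS_def)
  then obtain L2 where L2: "set L2 \<subseteq> insert \<psi> G" "K4C (Neg (conjs L2))"
    by (auto simp: consistent_def)
  define L3 where "L3 = L @ filter (\<lambda>x. x \<noteq> \<psi>) L2"
  have "set L3 \<subseteq> G" using L L2(1) by (auto simp: L3_def)
  moreover have "K4C (Neg (conjs L3))"
    by (rule taut_rule[of "[Imp (conjs L) \<psi>, Neg (conjs L2)]"])
       (use d L2 in \<open>auto simp: L3_def\<close>)
  ultimately show False using G by (auto simp: MCS_def consistent_def)
qed

lemma MCS_thm: "MCS G \<Longrightarrow> K4C \<psi> \<Longrightarrow> \<psi> \<in> G"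
proof -
  assume "MCS G" "K4C \<psi>"
  moreover have "K4C (Imp (conjs []) \<psi>)" by (rule taut1[OF \<open>K4C \<psi>\<close>]) simp
  ultimately show ?thesis using MCS_deriv[of G "[]"] by simp
qed

lemma MCS_mp: "MCS G \<Longrightarrow> Imp a b \<in> G \<Longrightarrow> a \<in> G \<Longrightarrow> b \<in> G"
  by (rule MCS_deriv[of G "[Imp a b, a]"]) (auto intro: K4C.Taut simp: taut_def)

lemma MCS_imp_rule: "MCS G \<Longrightarrow> K4C (Imp a b) \<Longrightarrow> a \<in> G \<Longrightarrow> b \<in> G"
proof -
  assume "MCS G" "K4C (Imp a b)" "a \<in> G"
  moreover have "K4C (Imp (conjs [a]) b)" by (rule taut1[OF \<open>K4C (Imp a b)\<close>]) simp
  ultimately show ?thesis using MCS_deriv[of G "[a]"] by simp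
qed

lemma MCS_Neg: "MCS G \<Longrightarrow> (Neg a \<in> G) = (a \<notin> G)"
proof
  assume G: "MCS G" and n: "Neg a \<in> G"
  show "a \<notin> G"
  proof
    assume "a \<in> G"
    have "K4C (Neg (conjs [a, Neg a]))" by (intro K4C.Taut) (simp add: taut_def)
    moreover have "set [a, Neg a] \<subseteq> G" using n \<open>a \<in> G\<close> by auto
    moreover have "consistent G" using G by (simp add: MCS_def)
    ultimately show False unfolding consistent_def by blast
  qed
next
  assume G: "MCS G" and n: "a \<notin> G"
  then have "\<not> consistent (insert a G)" by (auto simp: MCS_def)
  then obtain L2 where L2: "set L2 \<subseteq> insert a G" "K4C (Neg (conjs L2))"
    by (auto simp: consistent_def)
  have d: "K4C (Imp (conjs (filter (\<lambda>x. x \<noteq> a) L2)) (Neg a))"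
    by (rule taut1[OF L2(2)]) auto
  show "Neg a \<in> G"
    by (rule MCS_deriv[OF G _ d]) (use L2 in auto)
qed

lemma MCS_And: "MCS G \<Longrightarrow> (And a b \<in> G) = (a \<in> G \<and> b \<in> G)"
proof (intro iffI conjI)
  assume G: "MCS G"
  { assume "And a b \<in> G"
    then show "a \<in> G" "b \<in> G"
      by (auto intro!: MCS_imp_rule[OF G, of "And a b"] K4C.Taut simp: taut_def) }
  assume "a \<in> G \<and> b \<in> G"
  then show "And a b \<in> G"
    by (intro MCS_deriv[OF G, of "[a,b]"]) (auto intro: K4C.Taut simp: taut_def)
qed

lemma MCS_complete:
  assumes "consistent G" "\<And>\<phi>. \<phi> \<in> G \<or> Neg \<phi> \<in> G"
  shows "MCS G"
  unfolding MCS_def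
proof (intro conjI allI impI assms(1))
  fix \<phi> assume "\<phi> \<notin> G"
  then have "Neg \<phi> \<in> G" using assms(2) by blast
  then have "set [\<phi>, Neg \<phi>] \<subseteq> insert \<phi> G" by auto
  moreover have "K4C (Neg (conjs [\<phi>, Neg \<phi>]))" by (intro K4C.Taut) (simp add: taut_def)
  ultimately show "\<not> consistent (insert \<phi> G)" unfolding consistent_def by blast
qed

lemma MCS_subset_eq: "MCS G \<Longrightarrow> MCS H \<Longrightarrow> G \<subseteq> H \<Longrightarrow> G = H"
  by (metis MCS_Neg subsetD subsetI subset_antisym)

lemma Lindenbaum:
  assumes "consistent S"
  shows "\<exists>G. S \<subseteq> G \<and> MCS G"
proof -
  let ?A = "{G. S \<subseteq> G \<and> consistent G}"
  have "\<exists>M\<in>?A. \<forall>X\<in>?A. M \<subseteq> X \<longrightarrow> X = M"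
  proof (rule subset_Zorn_nonempty)
    show "?A \<noteq> {}" using assms by auto
  next
    fix C assume C: "C \<noteq> {}" "subset.chain ?A C"
    show "\<Union>C \<in> ?A"
    proof
      show "S \<subseteq> \<Union>C \<and> consistent (\<Union>C)"
      proof
        show "S \<subseteq> \<Union>C" using C unfolding subset.chain_def by blast
        show "consistent (\<Union>C)"
          unfolding consistent_def
        proof
          assume "\<exists>L. set L \<subseteq> \<Union>C \<and> K4C (Neg (conjs L))"
          then obtain L where L: "set L \<subseteq> \<Union>C" "K4C (Neg (conjs L))" by blast
          obtain B where "B \<in> C" "set L \<subseteq> B"
            using finite_subset_Union_chain[OF _ L(1) C(1) C(2)] by blast
          then show False using L(2) C(2) by (auto simp: subset.chain_def consistent_def)
        qed
      qed
    qed
  qed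
  then obtain M where M: "M \<in> ?A" "\<forall>X\<in>?A. M \<subseteq> X \<longrightarrow> X = M" by blast
  have "MCS M" unfolding MCS_def
  proof (intro conjI allI impI)
    show "consistent M" using M by auto
    fix \<phi> assume "\<phi> \<notin> M"
    then show "\<not> consistent (insert \<phi> M)" using M by blast
  qed
  then show ?thesis using M by blast
qed

section \<open>Canonical relations\<close>

definition Rel :: "'pv fm set \<Rightarrow> 'pv fm set \<Rightarrow> bool" where
  "Rel G H \<longleftrightarrow> (\<forall>\<phi>. Box \<phi> \<in> G \<longrightarrow> \<phi> \<in> H)"

definition fc :: "'pv fm set \<Rightarrow> 'pv fm set" where
  "fc G = {\<phi>. Next \<phi> \<in> G}"

lemma Rel_trans: "MCS G \<Longrightarrow> Rel G H \<Longrightarrow> Rel H E \<Longrightarrow> Rel G E"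
  unfolding Rel_def by (meson MCS_imp_rule K4C.Four)

lemma box_witness:
  assumes G: "MCS G" and nb: "Box \<phi> \<notin> G"
  shows "\<exists>H. MCS H \<and> Rel G H \<and> \<phi> \<notin> H"
proof -
  let ?S = "insert (Neg \<phi>) {\<psi>. Box \<psi> \<in> G}"
  have "consistent ?S"
    unfolding consistent_def
  proof
    assume "\<exists>L. set L \<subseteq> ?S \<and> K4C (Neg (conjs L))"
    then obtain L where L: "set L \<subseteq> ?S" "K4C (Neg (conjs L))" by blast
    define L' where "L' = filter (\<lambda>x. x \<noteq> Neg \<phi>) L"
    have 1: "K4C (Imp (conjs L') \<phi>)"
      by (rule taut_rule[of "[Neg (conjs L)]"]) (use L in \<open>auto simp: L'_def\<close>)
    have 2: "K4C (Imp (Box (conjs L')) (Box \<phi>))" using 1 by (rule box_mono)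
    have 3: "K4C (Imp (conjs (map Box L')) (Box \<phi>))"
      by (rule taut2[OF box_conjs[of L'] 2]) auto
    have "Box \<phi> \<in> G"
      by (rule MCS_deriv[OF G _ 3]) (use L in \<open>auto simp: L'_def\<close>)
    then show False using nb by blast
  qed
  then obtain H where H: "?S \<subseteq> H" "MCS H" using Lindenbaum by blast
  then have "\<phi> \<notin> H" using MCS_Neg by blast
  then show ?thesis using H by (auto simp: Rel_def)
qed

lemma fc_MCS:
  assumes G: "MCS G" shows "MCS (fc G)"
proof (rule MCS_complete)
  show "consistent (fc G)"
    unfolding consistent_def
  proof
    assume "\<exists>L. set L \<subseteq> fc G \<and> K4C (Neg (conjs L))"
    then obtain L where L: "set L \<subseteq> fc G" "K4C (Neg (conjs L))" by blast
    have "K4C (Next (Neg (conjs L)))" using L(2) by (rule K4C.Nec_next)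
    then have "K4C (Neg (Next (conjs L)))"
      by (rule taut2[OF _ K4C.Next_neg[of "conjs L"]]) auto
    then have a: "Neg (Next (conjs L)) \<in> G" using G MCS_thm by blast
    have "Next (conjs L) \<in> G"
      by (rule MCS_deriv[OF G _ next_conjs[of L]]) (use L in \<open>auto simp: fc_def\<close>)
    then show False using a MCS_Neg[OF G] by blast
  qed
next
  fix \<phi>
  show "\<phi> \<in> fc G \<or> Neg \<phi> \<in> fc G"
  proof (cases "Next \<phi> \<in> G")
    case False
    then have "Neg (Next \<phi>) \<in> G" using MCS_Neg[OF G] by blast
    then have "Next (Neg \<phi>) \<in> G"
    proof -
      have d: "K4C (Imp (Neg (Next \<phi>)) (Next (Neg \<phi>)))"
        by (rule taut1[OF K4C.Next_neg[of \<phi>]]) auto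
      show ?thesis using MCS_imp_rule[OF G d] \<open>Neg (Next \<phi>) \<in> G\<close> .
    qed
    then show ?thesis by (simp add: fc_def)
  qed (simp add: fc_def)
qed

lemma C_prop:
  assumes G: "MCS G" and H: "MCS H" and R: "Rel G H" and ne: "fc G \<noteq> fc H"
  shows "Rel (fc G) (fc H)"
proof -
  have GH: "MCS (fc G)" "MCS (fc H)" using fc_MCS G H by auto
  have "\<not> fc G \<subseteq> fc H" using ne MCS_subset_eq[OF GH] by blast
  then obtain \<psi> where psi: "\<psi> \<in> fc G" "\<psi> \<notin> fc H" by blast
  have psi': "Next \<psi> \<in> G" using psi(1) unfolding fc_def by simp
  show "Rel (fc G) (fc H)"
    unfolding Rel_def
  proof (intro allI impI)
    fix \<phi> assume "Box \<phi> \<in> fc G"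
    then have nb: "Next (Box \<phi>) \<in> G" unfolding fc_def by simp
    define cc where "cc = Imp (Neg \<psi>) \<phi>"
    have t1: "K4C (Imp \<psi> cc)" unfolding cc_def by (intro K4C.Taut) (simp add: taut_def)
    have t2: "K4C (Imp \<phi> cc)" unfolding cc_def by (intro K4C.Taut) (simp add: taut_def)
    have a: "Next cc \<in> G"
      using MCS_imp_rule[OF G next_mono[OF t1] psi'] .
    have b: "Next (Box cc) \<in> G"
      using MCS_imp_rule[OF G next_mono[OF box_mono[OF t2]] nb] .
    have c: "K4C (Imp (conjs [Next cc, Next (Box cc)]) (Box (Next cc)))"
      by (rule taut1[OF K4C.C[of cc]]) simp
    have "set [Next cc, Next (Box cc)] \<subseteq> G" using a b by simp
    then have "Box (Next cc) \<in> G" using MCS_deriv[OF G _ c] by blast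
    then have "Next cc \<in> H" using R unfolding Rel_def by blast
    then have 1: "Imp (Neg \<psi>) \<phi> \<in> fc H" unfolding fc_def cc_def by simp
    have 2: "Neg \<psi> \<in> fc H" using psi(2) MCS_Neg[OF GH(2)] by blast
    show "\<phi> \<in> fc H" using MCS_mp[OF GH(2) 1 2] .
  qed
qed



section \<open>The tree model\<close>

definition pts :: "'pv fm set list set" where
  "pts = {xs. xs \<noteq> [] \<and> (\<forall>G\<in>set xs. MCS G) \<and> successively Rel xs}"

definition pre :: "'a list \<Rightarrow> 'a list \<Rightarrow> bool" where
  "pre xs ys \<longleftrightarrow> (\<exists>zs. ys = xs @ zs)"

lemma pre_refl: "pre x x" by (auto simp: pre_def)
lemma pre_trans: "pre x y \<Longrightarrow> pre y z \<Longrightarrow> pre x z" by (auto simp: pre_def)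
lemma pre_antisym: "pre x y \<Longrightarrow> pre y x \<Longrightarrow> x = y" by (auto simp: pre_def)

definition upc :: "'pv fm set list set \<Rightarrow> bool" where
  "upc U \<longleftrightarrow> U \<subseteq> pts \<and> (\<forall>x\<in>U. \<forall>y\<in>pts. pre x y \<longrightarrow> y \<in> U)"

lemma istopology_upc: "istopology upc"
  unfolding istopology_def upc_def by blast

definition TT :: "'pv fm set list topology" where
  "TT = topology upc"

lemma openin_TT: "openin TT U = upc U"
  by (simp add: TT_def topology_inverse' istopology_upc)

lemma topspace_TT: "topspace TT = pts"
proof -
  have "upc pts" by (simp add: upc_def)
  then show ?thesis unfolding topspace_def openin_TT by (auto simp: upc_def)
qed

lemma derived_TT:
  "TT derived_set_of A = {x\<in>pts. \<exists>y\<in>A \<inter> pts. pre x y \<and> y \<noteq> x}"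
proof (intro set_eqI iffI)
  fix x assume x: "x \<in> TT derived_set_of A"
  then have xp: "x \<in> pts" by (simp add: derived_set_of_def topspace_TT)
  have "upc {y\<in>pts. pre x y}" by (auto simp: upc_def intro: pre_trans)
  moreover have "x \<in> {y\<in>pts. pre x y}" using xp pre_refl by blast
  ultimately have U: "x \<in> {y\<in>pts. pre x y} \<and> openin TT {y\<in>pts. pre x y}"
    unfolding openin_TT by simp
  have H: "\<forall>U. x \<in> U \<and> openin TT U \<longrightarrow> (\<exists>y\<noteq>x. y \<in> A \<and> y \<in> U)"
    using x unfolding derived_set_of_def by simp
  have "\<exists>y\<noteq>x. y \<in> A \<and> y \<in> {y\<in>pts. pre x y}"
    using mp[OF spec[OF H, of "{y\<in>pts. pre x y}"] U] .
  then show "x \<in> {x\<in>pts. \<exists>y\<in>A \<inter> pts. pre x y \<and> y \<noteq> x}" using xp by blast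
next
  fix x assume "x \<in> {x\<in>pts. \<exists>y\<in>A \<inter> pts. pre x y \<and> y \<noteq> x}"
  then obtain y where y: "x \<in> pts" "y \<in> A" "y \<in> pts" "pre x y" "y \<noteq> x" by blast
  show "x \<in> TT derived_set_of A"
    unfolding derived_set_of_def topspace_TT
  proof (intro CollectI conjI allI impI)
    show "x \<in> pts" by fact
    fix U assume "x \<in> U \<and> openin TT U"
    then have "y \<in> U" using y by (auto simp: openin_TT upc_def)
    then show "\<exists>z. z \<noteq> x \<and> z \<in> A \<and> z \<in> U" using y by blast
  qed
qed

definition FF :: "'pv fm set list \<Rightarrow> 'pv fm set list" where
  "FF xs = remdups_adj (map fc xs)"

lemma succ_rd: "successively (\<lambda>a b. a = b \<or> P a b) ys \<Longrightarrow> successively P (remdups_adj ys)"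
proof (induction ys rule: remdups_adj.induct)
  case (3 x y xs)
  then show ?case by (auto simp: successively_Cons)
qed auto

lemma FF_pts: "xs \<in> pts \<Longrightarrow> FF xs \<in> pts"
proof -
  assume xs: "xs \<in> pts"
  have h: "\<forall>G\<in>set xs. MCS G" "successively Rel xs" using xs by (auto simp: pts_def)
  have "successively (\<lambda>x y. fc x = fc y \<or> Rel (fc x) (fc y)) xs"
    using h
  proof (induction xs)
    case (Cons x xs)
    then show ?case using C_prop by (cases xs) (auto simp: successively_Cons)
  qed simp
  then have "successively (\<lambda>a b. a = b \<or> Rel a b) (map fc xs)"
    by (simp add: successively_map)
  then have "successively Rel (FF xs)" unfolding FF_def by (rule succ_rd)
  then show "FF xs \<in> pts" using xs fc_MCS by (auto simp: pts_def FF_def)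
qed

lemma last_FF: "xs \<noteq> [] \<Longrightarrow> last (FF xs) = fc (last xs)"
  by (simp add: FF_def last_map)

lemma FF_mono: "pre xs ys \<Longrightarrow> xs \<noteq> [] \<Longrightarrow> pre (FF xs) (FF ys)"
proof -
  assume "pre xs ys" "xs \<noteq> []"
  then obtain zs where ys: "ys = xs @ zs" by (auto simp: pre_def)
  show ?thesis
  proof (cases zs)
    case Nil
    then show ?thesis using ys pre_refl by simp
  next
    case (Cons z zs')
    obtain xs' x0 where xs: "xs = xs' @ [x0]" using \<open>xs \<noteq> []\<close> by (metis rev_exhaust)
    have m: "map fc ys = map fc xs' @ fc x0 # map fc zs" using ys xs by simp
    have "FF ys = remdups_adj (map fc xs' @ [fc x0]) @ tl (remdups_adj (fc x0 # map fc zs))"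
      unfolding FF_def m by (rule remdups_adj_append)
    moreover have "FF xs = remdups_adj (map fc xs' @ [fc x0])"
      unfolding FF_def xs by simp
    ultimately show ?thesis by (auto simp: pre_def)
  qed
qed

lemma Rel_pre:
  assumes x: "x \<in> pts" and y: "y \<in> pts" and p: "pre x y" and ne: "y \<noteq> x"
  shows "Rel (last x) (last y)"
proof -
  obtain zs where ys: "y = x @ zs" "zs \<noteq> []" using p ne by (auto simp: pre_def)
  have "successively Rel y" "\<forall>G\<in>set y. MCS G" using y by (auto simp: pts_def)
  then have "sorted_wrt Rel y"
    using successively_iff_sorted_wrt_strong[of y Rel] Rel_trans by blast
  then have "\<forall>a\<in>set x. \<forall>b\<in>set zs. Rel a b" using ys by (simp add: sorted_wrt_append)
  moreover have "last x \<in> set x" using x by (auto simp: pts_def)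
  moreover have "last y \<in> set zs" using ys by simp
  ultimately show ?thesis by blast
qed

definition VV :: "'pv \<Rightarrow> 'pv fm set list set" where
  "VV p = {x\<in>pts. Var p \<in> last x}"

lemma truth_lemma:
  "x \<in> pts \<Longrightarrow> (x \<in> tset TT FF VV \<phi>) = (\<phi> \<in> last x)"
proof (induction \<phi> arbitrary: x)
  case (Var p)
  then show ?case by (simp add: VV_def)
next
  case (And a b)
  have "MCS (last x)" using And.prems by (auto simp: pts_def)
  then show ?case using And by (simp add: MCS_And)
next
  case (Neg a)
  have "MCS (last x)" using Neg.prems by (auto simp: pts_def)
  then show ?case using Neg by (simp add: MCS_Neg topspace_TT)
next
  case (Next a)
  have "FF x \<in> pts" using Next.prems by (rule FF_pts)
  moreover have "x \<noteq> []" using Next.prems by (simp add: pts_def)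
  ultimately show ?case using Next by (simp add: topspace_TT last_FF fc_def)
next
  case (Box a)
  have G: "MCS (last x)" using Box.prems by (auto simp: pts_def)
  show ?case
  proof
    assume "x \<in> tset TT FF VV (Box a)"
    then have nd: "\<not> (\<exists>y\<in>pts. a \<notin> last y \<and> pre x y \<and> y \<noteq> x)"
      using Box by (auto simp: derived_TT topspace_TT)
    show "Box a \<in> last x"
    proof (rule ccontr)
      assume "Box a \<notin> last x"
      then obtain H where H: "MCS H" "Rel (last x) H" "a \<notin> H" using box_witness G by blast
      let ?y = "x @ [H]"
      have "?y \<in> pts" using Box.prems H
        by (auto simp: pts_def successively_append_iff)
      moreover have "pre x ?y" "?y \<noteq> x" by (auto simp: pre_def)
      ultimately show False using nd H by auto
    qed
  next
    assume b: "Box a \<in> last x"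
    have "\<not> (\<exists>y\<in>pts. a \<notin> last y \<and> pre x y \<and> y \<noteq> x)"
      using Rel_pre[OF Box.prems] b by (auto simp: Rel_def)
    then show "x \<in> tset TT FF VV (Box a)"
      using Box by (auto simp: derived_TT topspace_TT)
  qed
qed

lemma TD_TT: "TD_space TT"
  unfolding TD_space_def topspace_TT
proof
  fix x assume x: "x \<in> pts"
  have o: "openin TT {y\<in>pts. pre x y}" by (auto simp: openin_TT upc_def intro: pre_trans)
  have "openin TT (pts - {y\<in>pts. pre y x})"
    by (auto simp: openin_TT upc_def dest: pre_trans)
  then have c: "closedin TT {y\<in>pts. pre y x}" by (auto simp: closedin_def topspace_TT)
  have "{x} = {y\<in>pts. pre x y} \<inter> {y\<in>pts. pre y x}" using x pre_refl pre_antisym by blast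
  then show "\<exists>U F. openin TT U \<and> closedin TT F \<and> {x} = U \<inter> F" using o c by blast
qed

lemma cont_FF: "continuous_map TT TT FF"
  unfolding continuous_map_def topspace_TT
proof (intro conjI allI impI)
  show "FF \<in> pts \<rightarrow> pts" using FF_pts by blast
  fix U assume "openin TT U"
  then have U: "upc U" by (simp add: openin_TT)
  show "openin TT {x\<in>pts. FF x \<in> U}"
    unfolding openin_TT upc_def
  proof (intro conjI ballI impI)
    fix x y assume x: "x \<in> {x\<in>pts. FF x \<in> U}" and y: "y \<in> pts" and p: "pre x y"
    have "x \<noteq> []" using x by (simp add: pts_def)
    then have "pre (FF x) (FF y)" using FF_mono p by blast
    then show "y \<in> {x\<in>pts. FF x \<in> U}" using U x y FF_pts by (auto simp: upc_def)
  qed auto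
qed



section \<open>Soundness\<close>

lemma tset_sub: "(\<forall>p. V p \<subseteq> topspace T) \<Longrightarrow> tset T f V \<phi> \<subseteq> topspace T"
  by (induction \<phi>) auto

lemma tv_tset:
  assumes "x \<in> topspace T"
  shows "tv (\<lambda>\<psi>. x \<in> tset T f V \<psi>) \<phi> = (x \<in> tset T f V \<phi>)"
  using assms by (induction \<phi>) auto

lemma not_derived:
  assumes "x \<in> topspace T"
  shows "(x \<notin> T derived_set_of S) \<longleftrightarrow> (\<exists>U. openin T U \<and> x \<in> U \<and> (\<forall>y\<in>U. y \<noteq> x \<longrightarrow> y \<notin> S))"
  using assms unfolding derived_set_of_def by blast

lemma TD_derived:
  assumes TD: "TD_space T"
  shows "T derived_set_of (T derived_set_of S) \<subseteq> T derived_set_of S"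
proof
  fix x assume x: "x \<in> T derived_set_of (T derived_set_of S)"
  then have xX: "x \<in> topspace T" by (simp add: derived_set_of_def)
  show "x \<in> T derived_set_of S"
  proof (rule ccontr)
    assume "x \<notin> T derived_set_of S"
    then obtain W where W: "openin T W" "x \<in> W" "\<forall>y\<in>W. y \<noteq> x \<longrightarrow> y \<notin> S"
      using not_derived[OF xX] by blast
    obtain U F where UF: "openin T U" "closedin T F" "{x} = U \<inter> F"
      using TD xX unfolding TD_space_def by blast
    have o1: "openin T (W \<inter> U)" using W(1) UF(1) by auto
    have x1: "x \<in> W \<inter> U" using W(2) UF(3) by auto
    have Hx: "\<forall>U'. x \<in> U' \<and> openin T U' \<longrightarrow> (\<exists>y\<noteq>x. y \<in> T derived_set_of S \<and> y \<in> U')"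
      using x unfolding derived_set_of_def by simp
    have "\<exists>y\<noteq>x. y \<in> T derived_set_of S \<and> y \<in> W \<inter> U"
      using mp[OF spec[OF Hx, of "W \<inter> U"] conjI[OF x1 o1]] by blast
    then obtain y where y: "y \<noteq> x" "y \<in> T derived_set_of S" "y \<in> W \<inter> U"
      by blast
    have yF: "y \<notin> F" using y(1,3) UF(3) by auto
    have o2: "openin T (W \<inter> U - F)" using o1 UF(2) by (rule openin_diff)
    have y2: "y \<in> W \<inter> U - F" using y yF by auto
    have Hy: "\<forall>U'. y \<in> U' \<and> openin T U' \<longrightarrow> (\<exists>z\<noteq>y. z \<in> S \<and> z \<in> U')"
      using y(2) unfolding derived_set_of_def by simp
    have "\<exists>z\<noteq>y. z \<in> S \<and> z \<in> W \<inter> U - F"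
      using mp[OF spec[OF Hy, of "W \<inter> U - F"] conjI[OF y2 o2]] by blast
    then obtain z where z: "z \<noteq> y" "z \<in> S" "z \<in> W \<inter> U - F" by blast
    have "x \<in> F" using UF(3) by auto
    then have "z \<noteq> x" using z(3) by auto
    then show False using W(3) z by auto
  qed
qed

lemma soundness:
  assumes "K4C \<phi>" and TD: "TD_space T" and cont: "continuous_map T T f"
    and V: "\<forall>p. V p \<subseteq> topspace T"
  shows "tset T f V \<phi> = topspace T"
  using assms(1)
proof (induction \<phi> rule: K4C.induct)
  case (Taut \<phi>)
  show ?case
  proof
    show "tset T f V \<phi> \<subseteq> topspace T" using V by (rule tset_sub)
    show "topspace T \<subseteq> tset T f V \<phi>"
    proof
      fix x assume x: "x \<in> topspace T"
      have "tv (\<lambda>\<psi>. x \<in> tset T f V \<psi>) \<phi>" using Taut by (simp add: taut_def)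
      then show "x \<in> tset T f V \<phi>" by (metis tv_tset[OF x])
    qed
  qed
next
  case (K \<phi> \<psi>)
  let ?X = "topspace T"
  let ?a = "tset T f V \<phi>" and ?b = "tset T f V \<psi>" and ?ab = "tset T f V (Imp \<phi> \<psi>)"
  have "?X - ?b \<subseteq> (?X - ?ab) \<union> (?X - ?a)" by (auto simp: Imp_def)
  then have "T derived_set_of (?X - ?b) \<subseteq> T derived_set_of (?X - ?ab) \<union> T derived_set_of (?X - ?a)"
    by (metis derived_set_of_Un derived_set_of_mono)
  then show ?case using derived_set_of_subset_topspace[of T] by (auto simp: Imp_def)
next
  case (Four \<phi>)
  let ?X = "topspace T"
  let ?D = "T derived_set_of (?X - tset T f V \<phi>)"
  have "?X - (?X - ?D) = ?D" using derived_set_of_subset_topspace[of T] by blast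
  moreover have "T derived_set_of ?D \<subseteq> ?D" using TD by (rule TD_derived)
  ultimately show ?case using derived_set_of_subset_topspace[of T] by (auto simp: Imp_def)
next
  case (Next_neg \<phi>)
  have "f x \<in> topspace T" if "x \<in> topspace T" for x
    using cont that by (simp add: continuous_map_def Pi_iff)
  then show ?case by (auto simp: Iff_def Imp_def)
next
  case (Next_and \<phi> \<psi>)
  show ?case by (auto simp: Iff_def Imp_def)
next
  case (C \<phi>)
  let ?X = "topspace T"
  have fX: "f x \<in> ?X" if "x \<in> ?X" for x
    using cont that by (simp add: continuous_map_def Pi_iff)
  have key: "x \<notin> T derived_set_of (?X - tset T f V (Next \<phi>))"
    if x: "x \<in> ?X" and a: "f x \<in> tset T f V \<phi>"
      and b: "f x \<notin> T derived_set_of (?X - tset T f V \<phi>)" for x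
  proof -
    obtain U where U: "openin T U" "f x \<in> U" "\<forall>y\<in>U. y \<noteq> f x \<longrightarrow> y \<notin> ?X - tset T f V \<phi>"
      using b not_derived[OF fX[OF x]] by blast
    have o: "openin T {z \<in> ?X. f z \<in> U}" using cont U(1) by (simp add: continuous_map_def)
    have "\<forall>z\<in>{z \<in> ?X. f z \<in> U}. z \<noteq> x \<longrightarrow> z \<notin> ?X - tset T f V (Next \<phi>)"
      using U(3) a fX by auto
    then show ?thesis using not_derived[OF x] o x U(2) by blast
  qed
  show ?case
  proof
    show "tset T f V (Imp (And (Next \<phi>) (Next (Box \<phi>))) (Box (Next \<phi>))) \<subseteq> ?X"
      using V by (rule tset_sub)
    show "?X \<subseteq> tset T f V (Imp (And (Next \<phi>) (Next (Box \<phi>))) (Box (Next \<phi>)))"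
      using key by (auto simp: Imp_def)
  qed
next
  case (MP \<phi> \<psi>)
  then show ?case using tset_sub[OF V, where \<phi>=\<psi> and f=f] by (auto simp: Imp_def)
next
  case (Nec_box \<phi>)
  then show ?case by simp
next
  case (Nec_next \<phi>)
  have "f x \<in> topspace T" if "x \<in> topspace T" for x
    using cont that by (simp add: continuous_map_def Pi_iff)
  then show ?case using Nec_next by auto
qed

section \<open>Transfer along an injection\<close>

definition imgtop :: "('x \<Rightarrow> 'b) \<Rightarrow> 'x topology \<Rightarrow> 'b topology" where
  "imgtop h T = topology (\<lambda>U. \<exists>W. openin T W \<and> U = h ` W)"

lemma istopology_img:
  assumes "inj h"
  shows "istopology (\<lambda>U. \<exists>W. openin T W \<and> U = h ` W)"
  unfolding istopology_def
proof (intro conjI allI impI)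
  fix S S' assume "\<exists>W. openin T W \<and> S = h ` W" "\<exists>W. openin T W \<and> S' = h ` W"
  then obtain W W' where "openin T W" "S = h ` W" "openin T W'" "S' = h ` W'" by blast
  then show "\<exists>W. openin T W \<and> S \<inter> S' = h ` W"
    using assms by (intro exI[of _ "W \<inter> W'"]) (auto simp: image_Int)
next
  fix K assume K: "\<forall>S\<in>K. \<exists>W. openin T W \<and> S = h ` W"
  let ?W = "\<Union>{W. openin T W \<and> h ` W \<in> K}"
  have "\<Union>K = h ` ?W"
  proof
    show "\<Union>K \<subseteq> h ` ?W"
    proof
      fix y assume "y \<in> \<Union>K"
      then obtain S where "S \<in> K" "y \<in> S" by blast
      then obtain W where "openin T W" "S = h ` W" using K by blast
      then show "y \<in> h ` ?W" using \<open>S \<in> K\<close> \<open>y \<in> S\<close> by blast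
    qed
  qed blast
  moreover have "openin T ?W" by auto
  ultimately show "\<exists>W. openin T W \<and> \<Union>K = h ` W" by blast
qed

lemma openin_img: "inj h \<Longrightarrow> openin (imgtop h T) U = (\<exists>W. openin T W \<and> U = h ` W)"
  unfolding imgtop_def by (simp add: topology_inverse' istopology_img)

lemma topspace_img: "inj h \<Longrightarrow> topspace (imgtop h T) = h ` topspace T"
proof -
  assume h: "inj h"
  show ?thesis unfolding topspace_def
  proof
    show "\<Union> (Collect (openin (imgtop h T))) \<subseteq> h ` \<Union> (Collect (openin T))"
    proof
      fix y assume "y \<in> \<Union> (Collect (openin (imgtop h T)))"
      then obtain U where "openin (imgtop h T) U" "y \<in> U" by blast
      then obtain W where "openin T W" "U = h ` W" using openin_img[OF h] by blast
      then show "y \<in> h ` \<Union> (Collect (openin T))" using \<open>y \<in> U\<close> by blast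
    qed
    show "h ` \<Union> (Collect (openin T)) \<subseteq> \<Union> (Collect (openin (imgtop h T)))"
    proof
      fix y assume "y \<in> h ` \<Union> (Collect (openin T))"
      then obtain W x where "openin T W" "x \<in> W" "y = h x" by blast
      moreover have "openin (imgtop h T) (h ` W)" using openin_img[OF h] \<open>openin T W\<close> by blast
      ultimately show "y \<in> \<Union> (Collect (openin (imgtop h T)))" by blast
    qed
  qed
qed

lemma derived_img:
  assumes h: "inj h"
  shows "imgtop h T derived_set_of (h ` S) = h ` (T derived_set_of S)"
proof (intro set_eqI iffI)
  fix b assume b: "b \<in> imgtop h T derived_set_of (h ` S)"
  then obtain x where x: "x \<in> topspace T" "b = h x"
    by (auto simp: derived_set_of_def topspace_img[OF h])
  have H: "\<forall>U. b \<in> U \<and> openin (imgtop h T) U \<longrightarrow> (\<exists>y\<noteq>b. y \<in> h ` S \<and> y \<in> U)"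
    using b unfolding derived_set_of_def by simp
  have "\<exists>y\<noteq>x. y \<in> S \<and> y \<in> W" if W: "x \<in> W" "openin T W" for W
  proof -
    have "b \<in> h ` W \<and> openin (imgtop h T) (h ` W)" using W x by (auto simp: openin_img[OF h])
    then obtain y where "y \<noteq> b" "y \<in> h ` S" "y \<in> h ` W" using H by blast
    then obtain z where "z \<in> S" "z \<in> W" "h z \<noteq> h x" using x h by (auto dest: injD)
    then show ?thesis by (metis)
  qed
  then have "x \<in> T derived_set_of S" using x unfolding derived_set_of_def by blast
  then show "b \<in> h ` (T derived_set_of S)" using x by blast
next
  fix b assume "b \<in> h ` (T derived_set_of S)"
  then obtain x where x: "x \<in> T derived_set_of S" "b = h x" by blast
  have xX: "x \<in> topspace T" using x by (simp add: derived_set_of_def)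
  have H: "\<forall>U. x \<in> U \<and> openin T U \<longrightarrow> (\<exists>y\<noteq>x. y \<in> S \<and> y \<in> U)"
    using x unfolding derived_set_of_def by simp
  have "\<exists>y\<noteq>b. y \<in> h ` S \<and> y \<in> U" if U: "b \<in> U" "openin (imgtop h T) U" for U
  proof -
    obtain W where W: "openin T W" "U = h ` W" using U(2) by (auto simp: openin_img[OF h])
    then have "x \<in> W" using U(1) x(2) h by (auto dest: injD)
    then obtain y where "y \<noteq> x" "y \<in> S" "y \<in> W" using H W by blast
    then show ?thesis using W x(2) h by (auto dest: injD)
  qed
  then show "b \<in> imgtop h T derived_set_of (h ` S)"
    using xX x(2) unfolding derived_set_of_def topspace_img[OF h] by blast
qed

definition imgf :: "('x \<Rightarrow> 'b) \<Rightarrow> ('x \<Rightarrow> 'x) \<Rightarrow> 'b \<Rightarrow> 'b" where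
  "imgf h f b = h (f (inv h b))"

lemma imgf_h: "inj h \<Longrightarrow> imgf h f (h x) = h (f x)"
  by (simp add: imgf_def)

lemma tset_img:
  assumes h: "inj h" and V: "\<forall>p. V p \<subseteq> topspace T"
  shows "tset (imgtop h T) (imgf h f) (\<lambda>p. h ` V p) \<phi> = h ` tset T f V \<phi>"
proof (induction \<phi>)
  case (Var p) then show ?case by simp
next
  case (And a b) then show ?case using h by (simp add: image_Int)
next
  case (Neg a) then show ?case using h by (simp add: topspace_img image_set_diff)
next
  case (Box a)
  have "tset (imgtop h T) (imgf h f) (\<lambda>p. h ` V p) (Box a)
        = h ` topspace T - imgtop h T derived_set_of (h ` (topspace T - tset T f V a))"
    using Box h by (simp add: topspace_img image_set_diff)
  also have "\<dots> = h ` topspace T - h ` (T derived_set_of (topspace T - tset T f V a))"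
    using derived_img[OF h] by simp
  also have "\<dots> = h ` (topspace T - T derived_set_of (topspace T - tset T f V a))"
    using h by (simp add: image_set_diff)
  finally show ?case by simp
next
  case (Next a)
  show ?case
  proof (intro set_eqI iffI)
    fix b assume "b \<in> tset (imgtop h T) (imgf h f) (\<lambda>p. h ` V p) (Next a)"
    then obtain x where "x \<in> topspace T" "b = h x" "h (f x) \<in> h ` tset T f V a"
      using Next h by (auto simp: topspace_img imgf_h)
    then show "b \<in> h ` tset T f V (Next a)" using h by (auto dest: injD)
  next
    fix b assume "b \<in> h ` tset T f V (Next a)"
    then show "b \<in> tset (imgtop h T) (imgf h f) (\<lambda>p. h ` V p) (Next a)"
      using Next h by (auto simp: topspace_img imgf_h)
  qed
qed

lemma TD_img:
  assumes h: "inj h" and TD: "TD_space T"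
  shows "TD_space (imgtop h T)"
  unfolding TD_space_def topspace_img[OF h]
proof
  fix b assume "b \<in> h ` topspace T"
  then obtain x where x: "x \<in> topspace T" "b = h x" by blast
  then obtain U F where UF: "openin T U" "closedin T F" "{x} = U \<inter> F"
    using TD unfolding TD_space_def by blast
  have o: "openin (imgtop h T) (h ` U)" using UF(1) by (auto simp: openin_img[OF h])
  have "openin (imgtop h T) (h ` (topspace T - F))"
    using UF(2) by (auto simp: openin_img[OF h] closedin_def)
  moreover have "h ` (topspace T - F) = topspace (imgtop h T) - h ` F"
    using h by (simp add: topspace_img image_set_diff)
  moreover have "h ` F \<subseteq> topspace (imgtop h T)"
    using UF(2) closedin_subset by (auto simp: topspace_img[OF h])
  ultimately have c: "closedin (imgtop h T) (h ` F)" by (auto simp: closedin_def)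
  have "{b} = h ` U \<inter> h ` F" using UF(3) x(2) h by (auto simp: image_Int[symmetric])
  then show "\<exists>U F. openin (imgtop h T) U \<and> closedin (imgtop h T) F \<and> {b} = U \<inter> F"
    using o c by blast
qed

lemma cont_img:
  assumes h: "inj h" and cont: "continuous_map T T f"
  shows "continuous_map (imgtop h T) (imgtop h T) (imgf h f)"
  unfolding continuous_map_def topspace_img[OF h]
proof (intro conjI allI impI)
  have fX: "f x \<in> topspace T" if "x \<in> topspace T" for x
    using cont that by (simp add: continuous_map_def Pi_iff)
  show "imgf h f \<in> h ` topspace T \<rightarrow> h ` topspace T"
    using fX h by (auto simp: imgf_h)
  fix U assume "openin (imgtop h T) U"
  then obtain W where W: "openin T W" "U = h ` W" by (auto simp: openin_img[OF h])
  have "{b \<in> h ` topspace T. imgf h f b \<in> U} = h ` {x \<in> topspace T. f x \<in> W}"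
    using W(2) h by (auto simp: imgf_h inj_eq[OF h] image_iff)
  moreover have "openin T {x \<in> topspace T. f x \<in> W}" using cont W(1) by (simp add: continuous_map_def)
  ultimately show "openin (imgtop h T) {b \<in> h ` topspace T. imgf h f b \<in> U}"
    by (auto simp: openin_img[OF h])
qed

section \<open>Encoding lists of formula sets as formula sets\<close>

fun negs :: "nat \<Rightarrow> 'pv fm" where
  "negs 0 = Var undefined"
| "negs (Suc i) = Neg (negs i)"

lemma negs_inj: "negs i = negs j \<Longrightarrow> i = j"
proof (induction i arbitrary: j)
  case 0 then show ?case by (cases j) auto
next
  case (Suc i) then show ?case by (cases j) auto
qed

definition enc :: "'pv fm set list \<Rightarrow> 'pv fm set" where
  "enc L = {And (negs i) \<psi> | i \<psi>. i < length L \<and> \<psi> \<in> L ! i} \<union> {Box (negs i) | i. i < length L}"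

lemma enc_len: "{i. Box (negs i) \<in> enc L} = {..<length L}"
  unfolding enc_def by (auto dest: negs_inj)

lemma enc_nth: "i < length L \<Longrightarrow> L ! i = {\<psi>. And (negs i) \<psi> \<in> enc L}"
  unfolding enc_def by (auto dest: negs_inj)

lemma inj_enc: "inj enc"
proof (rule injI)
  fix L1 L2 :: "'pv fm set list"
  assume e: "enc L1 = enc L2"
  have len: "length L1 = length L2" using enc_len[of L1] enc_len[of L2] e by (metis lessThan_eq_iff)
  show "L1 = L2"
  proof (rule nth_equalityI)
    show "length L1 = length L2" by (rule len)
    fix i assume "i < length L1"
    then show "L1 ! i = L2 ! i" using enc_nth[of i L1] enc_nth[of i L2] e len by simp
  qed
qed

lemma valid_TD_D:
  "valid_TD TYPE('b) \<phi> \<Longrightarrow> TD_space (T::'b topology) \<Longrightarrow> continuous_map T T f \<Longrightarrow> valid_in T f \<phi>"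
  unfolding valid_TD_def DTS_def by blast

lemma valid_in_D: "valid_in T f \<phi> \<Longrightarrow> \<forall>p. V p \<subseteq> topspace T \<Longrightarrow> tset T f V \<phi> = topspace T"
  unfolding valid_in_def by blast

theorem mainTheorem5:
  fixes \<phi> :: "'pv fm"
  shows "(K4C \<phi> \<longrightarrow> valid_TD TYPE('a) \<phi>)
       \<and> ((\<exists>g :: 'pv fm set \<Rightarrow> 'b. inj g) \<and> valid_TD TYPE('b) \<phi> \<longrightarrow> K4C \<phi>)"
proof (intro conjI impI)
  assume "K4C \<phi>"
  then show "valid_TD TYPE('a) \<phi>"
    unfolding valid_TD_def valid_in_def DTS_def using soundness by blast
next
  assume "(\<exists>g :: 'pv fm set \<Rightarrow> 'b. inj g) \<and> valid_TD TYPE('b) \<phi>"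
  then obtain g :: "'pv fm set \<Rightarrow> 'b" where g: "inj g" and val: "valid_TD TYPE('b) \<phi>" by blast
  show "K4C \<phi>"
  proof (rule ccontr)
    assume nk: "\<not> K4C \<phi>"
    have "consistent {Neg \<phi>}"
      unfolding consistent_def
    proof
      assume "\<exists>L. set L \<subseteq> {Neg \<phi>} \<and> K4C (Neg (conjs L))"
      then obtain L where L: "set L \<subseteq> {Neg \<phi>}" "K4C (Neg (conjs L))" by blast
      have "K4C \<phi>" by (rule taut1[OF L(2)]) (use L in auto)
      then show False using nk by blast
    qed
    then obtain G where G: "Neg \<phi> \<in> G" "MCS G" using Lindenbaum by blast
    have x0: "[G] \<in> pts" using G by (simp add: pts_def)
    have nx: "[G] \<notin> tset TT FF VV \<phi>" using truth_lemma[OF x0] G MCS_Neg by auto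
    define h where "h = g \<circ> enc"
    have h: "inj h" unfolding h_def using g inj_enc by (rule inj_compose)
    have V: "\<forall>p::'pv. VV p \<subseteq> topspace TT" by (auto simp: VV_def topspace_TT)
    have "valid_in (imgtop h TT) (imgf h FF) \<phi>"
      by (rule valid_TD_D[OF val TD_img[OF h TD_TT] cont_img[OF h cont_FF]])
    moreover have "\<forall>p. h ` VV p \<subseteq> topspace (imgtop h TT)"
      using V by (simp add: topspace_img[OF h] image_mono)
    ultimately have "tset (imgtop h TT) (imgf h FF) (\<lambda>p. h ` VV p) \<phi> = topspace (imgtop h TT)"
      by (rule valid_in_D)
    then have "h ` tset TT FF VV \<phi> = h ` pts"
      using tset_img[OF h V] by (simp add: topspace_img[OF h] topspace_TT)
    then have "h [G] \<in> h ` tset TT FF VV \<phi>" using x0 by blast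
    then show False using nx h by (auto simp: inj_eq)
  qed
qed

end
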